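(* Let $K$ be a field of characteristic $\neq 2$, $n\ge1$, and let $\mathcal C$ be any EACP over $K$. Then $\mathcal C$ is not a division algebra, i.e. there exist $a,b\in\mathcal C$ with $a\neq0$ such that the equation $ax=b$ has no solution $x\in\mathcal C$.
   Context: An EACP over a field $K$ (characteristic $\neq 2$) is a $K$-algebra $\mathcal C$ with a basis $\{h_1,\dots,h_n,r\}$ (called a natural basis) whose multiplication is determined by bilinearity from $$h_ir=rh_i=\tfrac12\Big(\sum_{j=1}^n a_{ij}h_j+b_ir\Big),\qquad h_ih_j=0\ (i,j=1,\dots,n),\qquad rr=0,$$ for some constants $a_{ij},b_i\in K$. An algebra $\mathcal A$ is a division algebra if for all $a,b\in\mathcal A$ with $a\neq0$ the equations $ax=b$ and $xa=b$ are solvable in $\mathcal A$. *)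

theory Defs
  imports Main
begin

text \<open>Coordinate model of an EACP of dimension n+1 over a field 'a.
  An element is a coordinate function u :: nat => 'a supported on {0..n};
  coordinate i (i < n) is the coefficient of h_(i+1), coordinate n is the
  coefficient of r.  The structure constants a_ij, b_i are given (0-based)
  by A :: nat => nat => 'a and B :: nat => 'a.\<close>

definition eacp_carrier :: "nat \<Rightarrow> (nat \<Rightarrow> 'a::zero) set" where
  "eacp_carrier n = {u. \<forall>m>n. u m = 0}"

text \<open>Product of basis vectors e_k * e_l as a coordinate vector:
  h_i r = r h_i = 1/2 (sum_j a_ij h_j + b_i r), h_i h_j = 0, r r = 0.\<close>
definition eacp_basis_prod ::
  "nat \<Rightarrow> (nat \<Rightarrow> nat \<Rightarrow> 'a::field) \<Rightarrow> (nat \<Rightarrow> 'a) \<Rightarrow> nat \<Rightarrow> nat \<Rightarrow> nat \<Rightarrow> 'a" where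
  "eacp_basis_prod n A B k l =
     (if k < n \<and> l = n then
        (\<lambda>m. if m < n then A k m / 2 else if m = n then B k / 2 else 0)
      else if k = n \<and> l < n then
        (\<lambda>m. if m < n then A l m / 2 else if m = n then B l / 2 else 0)
      else (\<lambda>m. 0))"

definition eacp_mult ::
  "nat \<Rightarrow> (nat \<Rightarrow> nat \<Rightarrow> 'a::field) \<Rightarrow> (nat \<Rightarrow> 'a) \<Rightarrow> (nat \<Rightarrow> 'a) \<Rightarrow> (nat \<Rightarrow> 'a) \<Rightarrow> (nat \<Rightarrow> 'a)" where
  "eacp_mult n A B u v =
     (\<lambda>m. \<Sum>k\<le>n. \<Sum>l\<le>n. u k * v l * eacp_basis_prod n A B k l m)"

end

theory Submission
  imports Defs
begin

lemma mult_e0: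
  assumes "n \<ge> 1"
  shows "eacp_mult n A B (\<lambda>k. if k = 0 then 1 else 0) x m = x n * eacp_basis_prod n A B 0 n m"
proof -
  have "eacp_mult n A B (\<lambda>k. if k = 0 then 1 else 0) x m
      = (\<Sum>l\<le>n. x l * eacp_basis_prod n A B 0 l m)"
  proof -
    have "eacp_mult n A B (\<lambda>k. if k = 0 then 1 else 0) x m
       = (\<Sum>k\<le>n. if k = 0 then (\<Sum>l\<le>n. x l * eacp_basis_prod n A B k l m) else 0)"
      unfolding eacp_mult_def by (rule sum.cong) auto
    also have "\<dots> = (\<Sum>l\<le>n. x l * eacp_basis_prod n A B 0 l m)"
      by (subst sum.delta) auto
    finally show ?thesis .
  qed
  also have "\<dots> = x n * eacp_basis_prod n A B 0 n m"
  proof -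
    have "(\<Sum>l\<le>n. x l * eacp_basis_prod n A B 0 l m)
       = (\<Sum>l\<le>n. if l = n then x n * eacp_basis_prod n A B 0 n m else 0)"
      by (rule sum.cong) (use assms in \<open>auto simp: eacp_basis_prod_def\<close>)
    also have "\<dots> = x n * eacp_basis_prod n A B 0 n m"
      by (subst sum.delta) auto
    finally show ?thesis .
  qed
  finally show ?thesis .
qed

theorem mainTheorem6:
  fixes n :: nat and A :: "nat \<Rightarrow> nat \<Rightarrow> 'a::field" and B :: "nat \<Rightarrow> 'a"
  assumes "(2::'a) \<noteq> 0" and "n \<ge> 1"
  shows "\<exists>a\<in>eacp_carrier n. \<exists>b\<in>eacp_carrier n. a \<noteq> (\<lambda>_. 0) \<and>
           \<not> (\<exists>x\<in>eacp_carrier n. eacp_mult n A B a x = b)"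
proof -
  define a :: "nat \<Rightarrow> 'a" where "a = (\<lambda>k. if k = 0 then 1 else 0)"
  define w where "w = eacp_basis_prod n A B 0 n"
  have ac: "a \<in> eacp_carrier n" using assms by (auto simp: a_def eacp_carrier_def)
  have anz: "a \<noteq> (\<lambda>_. 0)" by (auto simp: a_def fun_eq_iff)
  have M: "\<And>x m. eacp_mult n A B a x m = x n * w m"
    unfolding a_def w_def using mult_e0[OF assms(2)] by blast
  show ?thesis
  proof (cases "w 0 = 0")
    case True
    define b :: "nat \<Rightarrow> 'a" where "b = (\<lambda>k. if k = 0 then 1 else 0)"
    have "b \<in> eacp_carrier n" using assms by (auto simp: b_def eacp_carrier_def)
    moreover have "\<not> (\<exists>x\<in>eacp_carrier n. eacp_mult n A B a x = b)"
    proof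
      assume "\<exists>x\<in>eacp_carrier n. eacp_mult n A B a x = b"
      then obtain x where "eacp_mult n A B a x = b" by blast
      hence "eacp_mult n A B a x 0 = b 0" by simp
      thus False using M True by (simp add: b_def)
    qed
    ultimately show ?thesis using ac anz by blast
  next
    case False
    define b :: "nat \<Rightarrow> 'a" where "b = (\<lambda>k. if k = 1 then 1 else 0)"
    have "b \<in> eacp_carrier n" using assms by (auto simp: b_def eacp_carrier_def)
    moreover have "\<not> (\<exists>x\<in>eacp_carrier n. eacp_mult n A B a x = b)"
    proof
      assume "\<exists>x\<in>eacp_carrier n. eacp_mult n A B a x = b"
      then obtain x where "eacp_mult n A B a x = b" by blast
      hence h0: "x n * w 0 = 0" and h1: "x n * w 1 = 1"
        using M by (metis b_def zero_neq_one)+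
      from h0 False have "x n = 0" by simp
      with h1 show False by simp
    qed
    ultimately show ?thesis using ac anz by blast
  qed
qed

end
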